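(* Let $T:\mathcal{M}_k\to\mathcal{M}_k$ be a completely positive map that is self-adjoint with respect to the trace inner product. Then $T$ is completely reducible if and only if for every orthogonal projection $W\in\mathcal{M}_k$ with $T(W\mathcal{M}_kW)\subseteq W\mathcal{M}_kW$ we have $T|_{W\mathcal{M}_kW^\perp+W^\perp\mathcal{M}_kW}\equiv0$.
   Context: $\mathcal{M}_k$ denotes the complex $k\times k$ matrices. For an orthogonal projection $W$, $W^\perp=\mathrm{Id}-W$; for orthogonal projections $V,W$, $V\mathcal{M}_kW=\{VXW:X\in\mathcal{M}_k\}$. A linear map $T:\mathcal{M}_k\to\mathcal{M}_k$ is completely positive if $T(X)=\sum_iR_iXR_i^*$ for some $R_i\in\mathcal{M}_k$; it is positive if it maps positive semidefinite matrices to positive semidefinite matrices, and self-adjoint if self-adjoint with respect to $\langle X,Y\rangle=\mathrm{tr}(XY^* )$. Given an orthogonal projection $V$ and a positive map $T:V\mathcal{M}_kV\to V\mathcal{M}_kV$, $T$ is irreducible if the only orthogonal projections $W$ with $W\mathcal{M}_kW\subseteq V\mathcal{M}_kV$ and $T(W\mathcal{M}_kW)\subseteq W\mathcal{M}_kW$ are $W=0$ and $W=V$. A self-adjoint positive map $T:\mathcal{M}_k\to\mathcal{M}_k$ is completely reducible if there are orthogonal projections $W_1,\dots,W_l$ with $W_iW_j=0$ for $i\ne j$, $T(W_i\mathcal{M}_kW_i)\subseteq W_i\mathcal{M}_kW_i$ and $T|_{W_i\mathcal{M}_kW_i}$ irreducible for every $i$, and $T|_R\equiv0$, where $R$ is the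 orthogonal complement (trace inner product) of $\bigoplus_iW_i\mathcal{M}_kW_i$ in $\mathcal{M}_k$. *)

theory Defs
  imports "HOL-Analysis.Analysis"
begin

text \<open>Complex k x k matrices are modelled as complex^'n^'n with k = CARD('n).\<close>

type_synonym 'n cmat = "complex^'n^'n"

definition cadj :: "'n::finite cmat \<Rightarrow> 'n cmat" where
  "cadj A = (\<chi> i j. cnj (A $ j $ i))"

definition tr_inner :: "'n::finite cmat \<Rightarrow> 'n cmat \<Rightarrow> complex" where
  "tr_inner X Y = trace (X ** cadj Y)"

definition orth_proj :: "'n::finite cmat \<Rightarrow> bool" where
  "orth_proj W \<longleftrightarrow> W ** W = W \<and> cadj W = W"

definition perp :: "'n::finite cmat \<Rightarrow> 'n cmat" where
  "perp W = mat 1 - W"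

definition corner :: "'n::finite cmat \<Rightarrow> 'n cmat \<Rightarrow> 'n cmat set" where
  "corner V W = {V ** X ** W | X. True}"

definition completely_positive :: "('n::finite cmat \<Rightarrow> 'n cmat) \<Rightarrow> bool" where
  "completely_positive T \<longleftrightarrow>
     (\<exists>Rs :: 'n cmat list. \<forall>X. T X = (\<Sum>R\<leftarrow>Rs. R ** X ** cadj R))"

definition trace_self_adjoint :: "('n::finite cmat \<Rightarrow> 'n cmat) \<Rightarrow> bool" where
  "trace_self_adjoint T \<longleftrightarrow> (\<forall>X Y. tr_inner (T X) Y = tr_inner X (T Y))"

definition irreducible_on :: "('n::finite cmat \<Rightarrow> 'n cmat) \<Rightarrow> 'n cmat \<Rightarrow> bool" where
  "irreducible_on T V \<longleftrightarrow>
     (\<forall>W. orth_proj W \<and> corner W W \<subseteq> corner V V \<and> T ` corner W W \<subseteq> corner W W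
          \<longrightarrow> W = 0 \<or> W = V)"

definition corner_sum :: "'n::finite cmat list \<Rightarrow> 'n cmat set" where
  "corner_sum Ws = {X. \<exists>Xs. length Xs = length Ws \<and>
      (\<forall>i<length Ws. Xs ! i \<in> corner (Ws ! i) (Ws ! i)) \<and> X = sum_list Xs}"

definition orth_compl :: "'n::finite cmat set \<Rightarrow> 'n cmat set" where
  "orth_compl S = {X. \<forall>Y\<in>S. tr_inner X Y = 0}"

definition completely_reducible :: "('n::finite cmat \<Rightarrow> 'n cmat) \<Rightarrow> bool" where
  "completely_reducible T \<longleftrightarrow>
     (\<exists>Ws :: 'n cmat list.
        (\<forall>i<length Ws. orth_proj (Ws ! i)) \<and>
        (\<forall>i<length Ws. \<forall>j<length Ws. i \<noteq> j \<longrightarrow> Ws ! i ** Ws ! j = 0) \<and>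
        (\<forall>i<length Ws. T ` corner (Ws ! i) (Ws ! i) \<subseteq> corner (Ws ! i) (Ws ! i)) \<and>
        (\<forall>i<length Ws. irreducible_on T (Ws ! i)) \<and>
        (\<forall>X\<in>orth_compl (corner_sum Ws). T X = 0))"

end

theory Submission
  imports Defs
begin

lemma cadj_cadj[simp]: "cadj (cadj A) = A"
  by (simp add: cadj_def vec_eq_iff)

lemma cadj_mult: "cadj (A ** B) = cadj B ** cadj (A::'n::finite cmat)"
  by (simp add: cadj_def vec_eq_iff matrix_matrix_mult_def mult.commute)

lemma cadj_add[simp]: "cadj (A + B) = cadj A + cadj (B::'n::finite cmat)"
  by (simp add: cadj_def vec_eq_iff)

lemma cadj_diff[simp]: "cadj (A - B) = cadj A - cadj (B::'n::finite cmat)"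
  by (simp add: cadj_def vec_eq_iff)

lemma cadj_0[simp]: "cadj (0::'n::finite cmat) = 0"
  by (simp add: cadj_def vec_eq_iff)

lemma cadj_1[simp]: "cadj (mat 1::'n::finite cmat) = mat 1"
  by (simp add: cadj_def vec_eq_iff mat_def)

lemma cadj_eq0[simp]: "cadj A = 0 \<longleftrightarrow> A = (0::'n::finite cmat)"
  by (metis cadj_0 cadj_cadj)

lemma mat_mul_0l[simp]: "(0::'n::finite cmat) ** A = 0"
  by (simp add: matrix_matrix_mult_def vec_eq_iff)
lemma mat_mul_0r[simp]: "A ** (0::'n::finite cmat) = 0"
  by (simp add: matrix_matrix_mult_def vec_eq_iff)

lemma mat_add_rdistrib: fixes A B C :: "'n::finite cmat" shows "(A + B) ** C = A ** C + B ** C"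
  by (simp add: matrix_matrix_mult_def vec_eq_iff distrib_right sum.distrib)
lemma mat_diff_rdistrib: fixes A B C :: "'n::finite cmat" shows "(A - B) ** C = A ** C - B ** C"
  by (simp add: matrix_matrix_mult_def vec_eq_iff left_diff_distrib sum_subtractf)
lemma mat_diff_ldistrib: fixes A B C :: "'n::finite cmat" shows "C ** (A - B) = C ** A - C ** B"
  by (simp add: matrix_matrix_mult_def vec_eq_iff right_diff_distrib sum_subtractf)

lemma mat_sum_rdistrib: fixes f :: "'a \<Rightarrow> 'n::finite cmat" and C :: "'n cmat" shows "(\<Sum>i\<in>S. f i) ** C = (\<Sum>i\<in>S. f i ** C)"
  by (induction S rule: infinite_finite_induct) (auto simp: mat_add_rdistrib)
lemma mat_sum_ldistrib: fixes f :: "'a \<Rightarrow> 'n::finite cmat" and C :: "'n cmat" shows "C ** (\<Sum>i\<in>S. f i) = (\<Sum>i\<in>S. C ** f i)"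
  by (induction S rule: infinite_finite_induct) (auto simp: matrix_add_ldistrib)

lemma cadj_sum: "cadj (\<Sum>i\<in>S. f i) = (\<Sum>i\<in>S. cadj (f i::'n::finite cmat))"
  by (induction S rule: infinite_finite_induct) auto

definition nn :: "'n::finite cmat \<Rightarrow> real" where
  "nn A = (\<Sum>i\<in>UNIV. \<Sum>j\<in>UNIV. (cmod (A$i$j))^2)"

lemma trace_nn: "trace (A ** cadj A) = complex_of_real (nn A)"
proof -
  have "trace (A ** cadj A) = (\<Sum>i\<in>UNIV. \<Sum>j\<in>UNIV. A$i$j * cnj (A$i$j))"
    by (simp add: trace_def matrix_matrix_mult_def cadj_def)
  also have "\<dots> = (\<Sum>i\<in>UNIV. \<Sum>j\<in>UNIV. complex_of_real ((cmod (A$i$j))^2))"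
    by (intro sum.cong refl) (simp only: complex_norm_square)
  finally show ?thesis by (simp add: nn_def)
qed

lemma nn_nonneg: "nn A \<ge> 0"
  by (simp add: nn_def sum_nonneg)

lemma nn_zero: "nn A = 0 \<Longrightarrow> A = 0"
proof -
  assume h: "nn A = 0"
  have "\<forall>i\<in>UNIV. (\<Sum>j\<in>UNIV. (cmod (A$i$j))^2) = 0"
    using h unfolding nn_def by (subst sum_nonneg_eq_0_iff[symmetric]) (auto intro: sum_nonneg)
  then have "\<forall>i j. (cmod (A$i$j))^2 = 0"
    by (auto simp: sum_nonneg_eq_0_iff)
  then show ?thesis by (simp add: vec_eq_iff)
qed

lemma trace_AAs_zero: "trace (A ** cadj A) = 0 \<Longrightarrow> A = (0::'n::finite cmat)"
  using nn_zero[of A] by (simp add: trace_nn)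

lemma trace_sum: "trace (\<Sum>i\<in>S. f i) = (\<Sum>i\<in>S. trace (f i::'n::finite cmat))"
  by (induction S rule: infinite_finite_induct) (auto simp: trace_add trace_0[simplified])

lemma sum_AAs_zero:
  assumes "finite S" "(\<Sum>i\<in>S. f i ** cadj (f i)) = (0::'n::finite cmat)" "i \<in> S"
  shows "f i = 0"
proof -
  have "(\<Sum>i\<in>S. complex_of_real (nn (f i))) = 0"
    using arg_cong[OF assms(2), of trace] by (simp add: trace_sum trace_nn trace_0[simplified])
  then have "complex_of_real (\<Sum>i\<in>S. nn (f i)) = 0" by (simp only: of_real_sum)
  then have "(\<Sum>i\<in>S. nn (f i)) = 0" by (simp only: of_real_eq_0_iff)
  moreover have "(\<Sum>i\<in>S. nn (f i)) = 0 \<longleftrightarrow> (\<forall>i\<in>S. nn (f i) = 0)"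
    by (rule sum_nonneg_eq_0_iff[OF assms(1)]) (rule nn_nonneg)
  ultimately have "\<forall>i\<in>S. nn (f i) = 0" by blast
  then have "nn (f i) = 0" using assms(3) by simp
  then show ?thesis by (rule nn_zero)
qed

lemma list_AAs_zero:
  fixes f :: "'a \<Rightarrow> 'n::finite cmat"
  assumes "(\<Sum>R\<leftarrow>Rs. f R ** cadj (f R)) = 0" "R \<in> set Rs"
  shows "f R = 0"
proof -
  have tr: "trace (\<Sum>R\<leftarrow>Rs. g R) = (\<Sum>R\<leftarrow>Rs. trace (g R::'n cmat))" for g :: "'a \<Rightarrow> 'n cmat" and Rs
    by (induction Rs) (auto simp: trace_add trace_0[simplified])
  have "trace (\<Sum>R\<leftarrow>Rs. f R ** cadj (f R)) = (\<Sum>R\<leftarrow>Rs. trace (f R ** cadj (f R)))"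
    by (rule tr)
  also have "\<dots> = (\<Sum>R\<leftarrow>Rs. complex_of_real (nn (f R)))"
    by (simp add: trace_nn)
  finally have "(\<Sum>R\<leftarrow>Rs. complex_of_real (nn (f R))) = 0"
    using assms(1) by (simp add: trace_0[simplified])
  moreover have "(\<Sum>R\<leftarrow>Rs. complex_of_real (nn (f R))) = complex_of_real (\<Sum>R\<leftarrow>Rs. nn (f R))"
    by (induction Rs) auto
  ultimately have "complex_of_real (\<Sum>R\<leftarrow>Rs. nn (f R)) = 0" by simp
  then have "(\<Sum>R\<leftarrow>Rs. nn (f R)) = 0" by (simp only: of_real_eq_0_iff)
  moreover have "(\<Sum>R\<leftarrow>Rs. nn (f R)) = 0 \<longleftrightarrow> (\<forall>x\<in>set (map (\<lambda>R. nn (f R)) Rs). x = 0)"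
    by (rule sum_list_nonneg_eq_0_iff) (auto simp: nn_nonneg)
  ultimately have "nn (f R) = 0" using assms(2) by auto
  then show ?thesis by (rule nn_zero)
qed

lemma sl_ldistrib: fixes f :: "'a \<Rightarrow> 'n::finite cmat" and A :: "'n cmat" shows "A ** (\<Sum>R\<leftarrow>Rs. f R) = (\<Sum>R\<leftarrow>Rs. A ** f R)"
  by (induction Rs) (auto simp: matrix_add_ldistrib)
lemma sl_rdistrib: fixes f :: "'a \<Rightarrow> 'n::finite cmat" and A :: "'n cmat" shows "(\<Sum>R\<leftarrow>Rs. f R) ** A = (\<Sum>R\<leftarrow>Rs. f R ** A)"
  by (induction Rs) (auto simp: mat_add_rdistrib)

definition comm :: "'n::finite cmat list \<Rightarrow> 'n cmat \<Rightarrow> bool" where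
  "comm Rs A \<longleftrightarrow> (\<forall>R\<in>set Rs. R ** A = A ** R \<and> cadj R ** A = A ** cadj R)"

lemma comm_mult: "comm Rs A \<Longrightarrow> comm Rs B \<Longrightarrow> comm Rs (A ** B)"
  unfolding comm_def by (metis matrix_mul_assoc)
lemma comm_add: "comm Rs A \<Longrightarrow> comm Rs B \<Longrightarrow> comm Rs (A + B)"
  unfolding comm_def by (simp add: matrix_add_ldistrib mat_add_rdistrib)
lemma comm_diff: "comm Rs A \<Longrightarrow> comm Rs B \<Longrightarrow> comm Rs (A - B)"
  unfolding comm_def by (simp add: mat_diff_ldistrib mat_diff_rdistrib)
lemma comm_1: "comm Rs (mat 1)"
  unfolding comm_def by simp
lemma comm_0: "comm Rs 0"
  unfolding comm_def by simp
lemma comm_cadj: "comm Rs A \<Longrightarrow> comm Rs (cadj A)"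
  unfolding comm_def by (metis cadj_cadj cadj_mult)

definition cinner :: "complex^'n::finite \<Rightarrow> complex^'n \<Rightarrow> complex" where
  "cinner x y = (\<Sum>i\<in>UNIV. x$i * cnj (y$i))"

lemma cinner_add_left: "cinner (a + b) c = cinner a c + cinner b c"
  by (simp add: cinner_def distrib_right sum.distrib)
lemma cinner_diff_left: "cinner (a - b) c = cinner a c - cinner b c"
  by (simp add: cinner_def left_diff_distrib sum_subtractf)
lemma cinner_diff_right: "cinner a (b - c) = cinner a b - cinner a c"
  by (simp add: cinner_def right_diff_distrib sum_subtractf)
lemma cinner_smult_left: "cinner (c *s a) w = c * cinner a w"
  by (simp add: cinner_def sum_distrib_left mult.assoc)
lemma cinner_smult_right: "cinner a (c *s w) = cnj c * cinner a w"
  by (simp add: cinner_def sum_distrib_left mult.assoc mult.left_commute)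
lemma cinner_commute: "cinner b a = cnj (cinner a b)"
  by (simp add: cinner_def mult.commute)
lemma cinner_axis: "cinner x (axis a 1) = x $ a"
proof -
  have "cinner x (axis a 1) = (\<Sum>i\<in>UNIV. if i = a then x$i else 0)"
    unfolding cinner_def by (intro sum.cong refl) (simp add: axis_def)
  then show ?thesis by simp
qed
lemma cinner_self_zero: "cinner x x = 0 \<Longrightarrow> x = 0"
proof -
  assume h: "cinner x x = 0"
  have "cinner x x = (\<Sum>i\<in>UNIV. complex_of_real ((cmod (x$i))^2))"
    unfolding cinner_def by (intro sum.cong refl) (simp only: complex_norm_square)
  also have "\<dots> = complex_of_real (\<Sum>i\<in>UNIV. (cmod (x$i))^2)" by (simp only: of_real_sum)
  finally have e: "cinner x x = complex_of_real (\<Sum>i\<in>UNIV. (cmod (x$i))^2)" .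
  have "(\<Sum>i\<in>UNIV. (cmod (x$i))^2) = 0" using e h by (metis of_real_eq_0_iff)
  moreover have "(\<Sum>i\<in>UNIV. (cmod (x$i))^2) = 0 \<longleftrightarrow> (\<forall>i\<in>UNIV. (cmod (x$i))^2 = 0)"
    by (rule sum_nonneg_eq_0_iff) auto
  ultimately show "x = 0" by (simp add: vec_eq_iff)
qed
lemma inner_cinner: "x \<bullet> y = Re (cinner x y)"
  by (simp add: inner_vec_def cinner_def inner_complex_def Re_sum)

lemma scaleR_smult: "c *\<^sub>R (x::complex^'n) = complex_of_real c *s x"
  unfolding vec_eq_iff by (auto simp: scaleR_conv_of_real[where 'a=complex])

lemma proj_exists:
  fixes E :: "(complex^'n::finite) set"
  assumes E0: "0 \<in> E" and Eadd: "\<And>x y. x\<in>E \<Longrightarrow> y\<in>E \<Longrightarrow> x + y \<in> E"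
    and Esm: "\<And>c x. x \<in> E \<Longrightarrow> c *s x \<in> E"
  shows "\<exists>P. orth_proj P \<and> (\<forall>v. P *v v \<in> E) \<and> (\<forall>v\<in>E. P *v v = v)"
proof -
  have sub: "subspace E" unfolding subspace_def using E0 Eadd Esm by (simp add: scaleR_smult)
  have spanE: "span E = E" using sub by simp
  have Ediff: "x - y \<in> E" if "x \<in> E" "y \<in> E" for x y
    using Eadd[OF that(1) Esm[OF that(2), of "-1"]] by simp
  have corth: "cinner z w = 0" if "\<forall>w\<in>E. z \<bullet> w = 0" "w \<in> E" for z w
  proof -
    have "Re (cinner z w) = 0" using that inner_cinner by metis
    moreover have "Re (cinner z (\<i> *s w)) = 0" using that Esm inner_cinner by metis
    then have "Im (cinner z w) = 0" by (simp add: cinner_smult_right)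
    ultimately show ?thesis by (simp add: complex_eq_iff)
  qed
  define pr where "pr x = (SOME y. y \<in> E \<and> (\<forall>w\<in>E. cinner (x - y) w = 0))" for x
  have ex: "\<exists>y. y \<in> E \<and> (\<forall>w\<in>E. cinner (x - y) w = 0)" for x
  proof -
    obtain y z where y: "y \<in> span E" and z: "\<And>w. w \<in> span E \<Longrightarrow> orthogonal z w" and xyz: "x = y + z"
      using orthogonal_subspace_decomp_exists[of E x] by blast
    have "\<forall>w\<in>E. z \<bullet> w = 0" using z spanE by (simp add: orthogonal_def)
    then have "\<forall>w\<in>E. cinner (x - y) w = 0" using corth xyz by simp
    then show ?thesis using y spanE by blast
  qed
  have pr: "pr x \<in> E" "\<forall>w\<in>E. cinner (x - pr x) w = 0" for x
    using someI_ex[OF ex[of x]] unfolding pr_def by blast+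
  have uniq: "pr x = y" if "y \<in> E" "\<forall>w\<in>E. cinner (x - y) w = 0" for x y
  proof -
    have d: "pr x - y \<in> E" using Ediff pr(1) that(1) by blast
    have "cinner (pr x - y) (pr x - y) = cinner (x - y) (pr x - y) - cinner (x - pr x) (pr x - y)"
      by (simp add: cinner_diff_left[symmetric])
    also have "\<dots> = 0" using that(2) pr(2) d by simp
    finally show ?thesis using cinner_self_zero[of "pr x - y"] by simp
  qed
  have pr_E: "pr y = y" if "y \<in> E" for y using uniq[of y y] that by (simp add: cinner_def)
  have pr_add: "pr (x + y) = pr x + pr y" for x y
  proof (rule uniq)
    show "pr x + pr y \<in> E" by (rule Eadd[OF pr(1) pr(1)])
    show "\<forall>w\<in>E. cinner (x + y - (pr x + pr y)) w = 0"
    proof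
      fix w assume w: "w \<in> E"
      have "x + y - (pr x + pr y) = (x - pr x) + (y - pr y)" by simp
      then show "cinner (x + y - (pr x + pr y)) w = 0"
        using pr(2)[of x] pr(2)[of y] w by (simp only: cinner_add_left) simp
    qed
  qed
  have pr_sm: "pr (c *s x) = c *s pr x" for c x
  proof (rule uniq)
    show "c *s pr x \<in> E" by (rule Esm[OF pr(1)])
    show "\<forall>w\<in>E. cinner (c *s x - c *s pr x) w = 0"
    proof
      fix w assume w: "w \<in> E"
      have "c *s x - c *s pr x = c *s (x - pr x)" by (simp only: vector_ssub_ldistrib)
      then show "cinner (c *s x - c *s pr x) w = 0"
        using pr(2)[of x] w by (simp only: cinner_smult_left) simp
    qed
  qed
  have pr0: "pr 0 = 0" using pr_E[OF E0] .
  have pr_sum: "pr (\<Sum>i\<in>S. f i) = (\<Sum>i\<in>S. pr (f i))" for S :: "'n set" and f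
    by (induction S rule: infinite_finite_induct) (auto simp: pr0 pr_add)
  define P :: "'n cmat" where "P = (\<chi> a b. pr (axis b 1) $ a)"
  have Pv: "P *v x = pr x" for x
  proof -
    have "pr x = pr (\<Sum>b\<in>UNIV. x$b *s axis b 1)" by (simp add: basis_expansion)
    also have "\<dots> = (\<Sum>b\<in>UNIV. x$b *s pr (axis b 1))" by (simp add: pr_sum pr_sm)
    finally show ?thesis
      by (simp add: vec_eq_iff P_def matrix_vector_mult_def mult.commute)
  qed
  have sym: "cinner x (pr y) = cinner (pr x) y" for x y
  proof -
    have "cinner x (pr y) = cinner (pr x) (pr y) + cinner (x - pr x) (pr y)"
      by (simp add: cinner_diff_left)
    also have "\<dots> = cinner (pr x) (pr y)" using pr by simp
    also have "\<dots> = cinner (pr x) y - cinner (pr x) (y - pr y)"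
      by (simp add: cinner_diff_right)
    also have "\<dots> = cinner (pr x) y"
      using pr cinner_commute[of "pr x" "y - pr y"] by simp
    finally show ?thesis .
  qed
  have PP: "P ** P = P"
    unfolding matrix_eq by (simp add: matrix_vector_mul_assoc[symmetric] Pv pr_E pr(1))
  have cP: "cadj P = P"
  proof -
    have "cnj (pr (axis a 1) $ b) = pr (axis b 1) $ a" for a b
      using sym[of "axis b 1" "axis a 1"] cinner_axis cinner_commute
      by (metis complex_cnj_cnj)
    then show ?thesis by (simp add: cadj_def P_def vec_eq_iff)
  qed
  show ?thesis
    using PP cP Pv pr pr_E unfolding orth_proj_def by auto
qed


lemma mv_smult: "(A::'n::finite cmat) *v (c *s v) = c *s (A *v v)"
  by (simp add: vec_eq_iff matrix_vector_mult_def sum_distrib_left mult.left_commute)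

lemma mat_eq_by_vec: "(\<And>v. (A::'n::finite cmat) *v (B *v v) = B *v v) \<Longrightarrow> A ** B = B"
  by (simp add: matrix_eq matrix_vector_mul_assoc[symmetric])

locale kraus =
  fixes T :: "'n::finite cmat \<Rightarrow> 'n cmat" and Rs :: "'n cmat list"
  assumes K: "\<And>X. T X = (\<Sum>R\<leftarrow>Rs. R ** X ** cadj R)"
begin

lemma T_add: "T (X + Y) = T X + T Y"
  by (simp add: K matrix_add_ldistrib mat_add_rdistrib sum_list_addf)
lemma T_0[simp]: "T 0 = 0"
  by (simp add: K)
lemma T_diff: "T (X - Y) = T X - T Y"
  by (simp add: K mat_diff_ldistrib mat_diff_rdistrib sum_list_subtractf)
lemma T_sum: "T (\<Sum>i\<in>S. f i) = (\<Sum>i\<in>S. T (f i))"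
  by (induction S rule: infinite_finite_induct) (auto simp: T_add)
lemma T_left: "comm Rs A \<Longrightarrow> T (A ** X) = A ** T X"
  unfolding K sl_ldistrib comm_def
  by (intro arg_cong[where f=sum_list] map_cong refl) (metis matrix_mul_assoc)
lemma T_right: "comm Rs A \<Longrightarrow> T (X ** A) = T X ** A"
  unfolding K sl_rdistrib comm_def
  by (intro arg_cong[where f=sum_list] map_cong refl) (metis matrix_mul_assoc)

lemma comm_invariant: "comm Rs W \<Longrightarrow> T ` corner W W \<subseteq> corner W W"
  unfolding corner_def using T_left T_right by auto

lemma T_corner: "comm Rs A \<Longrightarrow> comm Rs B \<Longrightarrow> T (A ** X ** B) = A ** T X ** B"
  using T_left T_right by simp

lemma sum_form: "W ** T X ** W = (\<Sum>R\<leftarrow>Rs. (W ** R ** V) ** cadj (W ** R ** V))"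
  if "X = V ** cadj V" "cadj W = W" for W V X
  unfolding K sl_ldistrib sl_rdistrib that cadj_mult
  by (intro arg_cong[where f=sum_list] map_cong refl) (simp add: matrix_mul_assoc)

lemma inv_comm:
  assumes SA: "trace_self_adjoint T" and W: "orth_proj W" and inv: "T ` corner W W \<subseteq> corner W W"
  shows "comm Rs W"
proof -
  define P where "P = mat 1 - W"
  have WW: "W ** W = W" and cW: "cadj W = W" using W by (auto simp: orth_proj_def)
  have cP: "cadj P = P" by (simp add: P_def cW)
  have WP: "W ** P = 0" by (simp add: P_def mat_diff_ldistrib WW)
  have PW: "P ** W = 0" by (simp add: P_def mat_diff_rdistrib WW)
  have PP: "P ** P = P" by (simp add: P_def mat_diff_rdistrib mat_diff_ldistrib WW)
  have sum1: "W + P = mat 1" by (simp add: P_def)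
  have WW': "\<And>Y. Y ** W ** W = Y ** W" by (metis WW matrix_mul_assoc)
  have inW: "\<And>Z. T (W ** Z ** W) \<in> corner W W"
    using inv unfolding corner_def by blast
  obtain X where X: "T W = W ** X ** W"
    using inW[of "mat 1"] WW unfolding corner_def by auto
  have e1: "P ** T W ** P = 0"
    by (simp add: X matrix_mul_assoc PW)
  have e2: "P ** T W ** P = (\<Sum>R\<leftarrow>Rs. (P ** R ** W) ** cadj (P ** R ** W))"
    by (rule sum_form[where W=P and V=W and X=W]) (simp_all add: cW WW cP)
  have a: "P ** R ** W = 0" if "R \<in> set Rs" for R
    using list_AAs_zero[of "\<lambda>R. P ** R ** W" Rs R] e1 e2 that by simp
  define M where "M = T P"
  have tz: "tr_inner M (W ** Z ** W) = 0" for Z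
  proof -
    obtain Z' where Z': "T (W ** Z ** W) = W ** Z' ** W" using inW[of Z] unfolding corner_def by auto
    have "tr_inner M (W ** Z ** W) = tr_inner P (T (W ** Z ** W))"
      using SA unfolding trace_self_adjoint_def M_def by simp
    also have "\<dots> = trace (P ** W ** cadj Z' ** W)"
      by (simp add: Z' tr_inner_def cadj_mult cW matrix_mul_assoc)
    also have "\<dots> = 0" by (simp add: PW trace_0[simplified])
    finally show ?thesis .
  qed
  have "trace ((W ** M ** W) ** cadj (W ** M ** W)) = trace (W ** (M ** W ** cadj M ** W))"
    by (simp add: cadj_mult cW matrix_mul_assoc WW')
  also have "\<dots> = trace (M ** W ** cadj M ** W ** W)"
    by (subst trace_mul_sym) (simp add: matrix_mul_assoc)
  also have "\<dots> = tr_inner M (W ** M ** W)"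
    by (simp add: tr_inner_def cadj_mult cW matrix_mul_assoc WW')
  also have "\<dots> = 0" by (rule tz)
  finally have f1: "W ** M ** W = 0" by (rule trace_AAs_zero)
  have f2: "W ** M ** W = (\<Sum>R\<leftarrow>Rs. (W ** R ** P) ** cadj (W ** R ** P))"
    unfolding M_def by (rule sum_form[where W=W and V=P and X=P]) (simp_all add: cW PP cP)
  have b: "W ** R ** P = 0" if "R \<in> set Rs" for R
    using list_AAs_zero[of "\<lambda>R. W ** R ** P" Rs R] f1 f2 that by simp
  have c: "R ** W = W ** R" if "R \<in> set Rs" for R
  proof -
    have "R ** W = (W + P) ** R ** W" by (simp add: sum1)
    also have "\<dots> = W ** R ** W" using a[OF that] by (simp add: mat_add_rdistrib)
    also have "\<dots> = W ** R ** (W + P)" using b[OF that] by (simp add: matrix_add_ldistrib)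
    also have "\<dots> = W ** R" by (simp add: sum1)
    finally show ?thesis .
  qed
  show ?thesis unfolding comm_def
    using c by (metis cW cadj_mult)
qed

lemma eig:
  assumes Q: "orth_proj Q" "comm Rs Q" and Wi: "orth_proj Wi" "comm Rs Wi"
    and irr: "irreducible_on T Wi"
  shows "Q ** Wi = Wi \<or> (\<forall>v. Wi *v v = v \<and> Q *v v = v \<longrightarrow> v = 0)"
proof -
  define E where "E = {v. Wi *v v = v \<and> Q *v v = v}"
  have "\<exists>P. orth_proj P \<and> (\<forall>v. P *v v \<in> E) \<and> (\<forall>v\<in>E. P *v v = v)"
    by (rule proj_exists) (auto simp: E_def matrix_vector_right_distrib mv_smult)
  then obtain P where P: "orth_proj P" and PE: "\<And>v. P *v v \<in> E" and Pid: "\<And>v. v \<in> E \<Longrightarrow> P *v v = v"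
    by blast
  have cP: "cadj P = P" and cWi: "cadj Wi = Wi" using P Wi by (auto simp: orth_proj_def)
  have WiP: "Wi ** P = P" by (rule mat_eq_by_vec) (use PE in \<open>auto simp: E_def\<close>)
  have PWi: "P ** Wi = P" using arg_cong[OF WiP, of cadj] by (simp add: cadj_mult cP cWi)
  have inv: "P ** (S ** P) = S ** P" if S: "Wi ** S = S ** Wi" "Q ** S = S ** Q" for S
  proof (rule mat_eq_by_vec)
    fix v
    have "S *v (P *v v) \<in> E"
      using PE[of v] S unfolding E_def
      by (simp add: matrix_vector_mul_assoc) (metis matrix_vector_mul_assoc)
    then have "P *v (S *v (P *v v)) = S *v (P *v v)" by (rule Pid)
    then show "P *v ((S ** P) *v v) = (S ** P) *v v"
      by (simp add: matrix_vector_mul_assoc[symmetric])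
  qed
  have "comm Rs P" unfolding comm_def
  proof
    fix R assume R: "R \<in> set Rs"
    have cR: "Wi ** R = R ** Wi" "Q ** R = R ** Q" "Wi ** cadj R = cadj R ** Wi" "Q ** cadj R = cadj R ** Q"
      using Q(2) Wi(2) R unfolding comm_def by auto
    have i1: "P ** (R ** P) = R ** P" by (rule inv) (use cR in auto)
    have i2: "P ** (cadj R ** P) = cadj R ** P" by (rule inv) (use cR in auto)
    have "P ** R = cadj (cadj R ** P)" by (simp add: cadj_mult cP)
    also have "\<dots> = cadj (P ** (cadj R ** P))" by (simp only: i2)
    also have "\<dots> = P ** (R ** P)" by (simp add: cadj_mult cP matrix_mul_assoc)
    also have "\<dots> = R ** P" by (rule i1)
    finally have e1: "R ** P = P ** R" by simp
    have "P ** cadj R = cadj (R ** P)" by (simp add: cadj_mult cP)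
    also have "\<dots> = cadj (P ** (R ** P))" by (simp only: i1)
    also have "\<dots> = P ** (cadj R ** P)" by (simp add: cadj_mult cP matrix_mul_assoc)
    also have "\<dots> = cadj R ** P" by (rule i2)
    finally have e2: "cadj R ** P = P ** cadj R" by simp
    show "R ** P = P ** R \<and> cadj R ** P = P ** cadj R" using e1 e2 by simp
  qed
  then have Tinv: "T ` corner P P \<subseteq> corner P P" by (rule comm_invariant)
  have sub: "corner P P \<subseteq> corner Wi Wi"
  proof
    fix Y assume "Y \<in> corner P P"
    then obtain X where "Y = P ** X ** P" unfolding corner_def by auto
    then have "Y = Wi ** (P ** X ** P) ** Wi"
      by (metis WiP PWi matrix_mul_assoc)
    then show "Y \<in> corner Wi Wi" unfolding corner_def by auto
  qed
  have "P = 0 \<or> P = Wi" using irr P Tinv sub unfolding irreducible_on_def by blast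
  then show ?thesis
  proof
    assume "P = 0"
    then show ?thesis using Pid unfolding E_def by auto
  next
    assume "P = Wi"
    then have "Q ** Wi = Wi" using PE by (intro mat_eq_by_vec) (auto simp: E_def)
    then show ?thesis by simp
  qed
qed

end


lemma tr_inner_sum: "tr_inner V (\<Sum>i\<in>S. f i) = (\<Sum>i\<in>S. tr_inner V (f i))"
  by (simp add: tr_inner_def cadj_sum mat_sum_ldistrib trace_sum)

locale cred = kraus +
  fixes Ws :: "'n::finite cmat list"
  assumes SA: "trace_self_adjoint T"
    and orth: "\<And>i. i < length Ws \<Longrightarrow> orth_proj (Ws!i)"
    and port: "\<And>i j. i < length Ws \<Longrightarrow> j < length Ws \<Longrightarrow> i \<noteq> j \<Longrightarrow> Ws!i ** Ws!j = 0"
    and winv: "\<And>i. i < length Ws \<Longrightarrow> T ` corner (Ws!i) (Ws!i) \<subseteq> corner (Ws!i) (Ws!i)"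
    and wirr: "\<And>i. i < length Ws \<Longrightarrow> irreducible_on T (Ws!i)"
    and kill: "\<And>X. X \<in> orth_compl (corner_sum Ws) \<Longrightarrow> T X = 0"
begin

lemma wcomm: "i < length Ws \<Longrightarrow> comm Rs (Ws!i)"
  using inv_comm[OF SA orth winv] .

lemma WWi: "i < length Ws \<Longrightarrow> Ws!i ** Ws!i = Ws!i"
  using orth by (auto simp: orth_proj_def)
lemma cWi: "i < length Ws \<Longrightarrow> cadj (Ws!i) = Ws!i"
  using orth by (auto simp: orth_proj_def)

lemma sandwich_sum:
  assumes "j < length Ws"
  shows "Ws!j ** (\<Sum>i<length Ws. Ws!i ** Z ** Ws!i) ** Ws!j = Ws!j ** Z ** Ws!j"
proof -
  have "Ws!j ** (\<Sum>i<length Ws. Ws!i ** Z ** Ws!i) ** Ws!j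
      = (\<Sum>i<length Ws. Ws!j ** (Ws!i ** Z ** Ws!i) ** Ws!j)"
    by (simp add: mat_sum_ldistrib mat_sum_rdistrib)
  also have "\<dots> = (\<Sum>i<length Ws. if i = j then Ws!j ** Z ** Ws!j else 0)"
  proof (intro sum.cong refl)
    fix i assume i: "i \<in> {..<length Ws}"
    show "Ws!j ** (Ws!i ** Z ** Ws!i) ** Ws!j = (if i = j then Ws!j ** Z ** Ws!j else 0)"
    proof (cases "i = j")
      case True
      then show ?thesis using WWi[OF assms]
        by (simp add: matrix_mul_assoc) (metis matrix_mul_assoc)
    next
      case False
      have "Ws!j ** Ws!i = 0" using port[OF assms] i False by auto
      then show ?thesis using False by (simp add: matrix_mul_assoc)
    qed
  qed
  also have "\<dots> = Ws!j ** Z ** Ws!j" using assms by simp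
  finally show ?thesis .
qed

lemma decomp: "T Z = (\<Sum>i<length Ws. Ws!i ** T Z ** Ws!i)"
proof -
  define V where "V = Z - (\<Sum>i<length Ws. Ws!i ** Z ** Ws!i)"
  have VWj: "Ws!j ** V ** Ws!j = 0" if "j < length Ws" for j
    unfolding V_def using sandwich_sum[OF that]
    by (simp add: mat_diff_ldistrib mat_diff_rdistrib)
  have "V \<in> orth_compl (corner_sum Ws)"
    unfolding orth_compl_def
  proof
    show "\<forall>Y\<in>corner_sum Ws. tr_inner V Y = 0"
    proof
      fix Y assume "Y \<in> corner_sum Ws"
      then obtain Xs where len: "length Xs = length Ws"
        and Xs: "\<forall>i<length Ws. Xs ! i \<in> corner (Ws ! i) (Ws ! i)" and Y: "Y = sum_list Xs"
        unfolding corner_sum_def by auto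
      have "Y = (\<Sum>i<length Ws. Xs!i)"
        using Y len by (simp add: sum_list_sum_nth atLeast0LessThan)
      then have "tr_inner V Y = (\<Sum>i<length Ws. tr_inner V (Xs!i))"
        by (simp add: tr_inner_sum)
      also have "\<dots> = 0"
      proof (intro sum.neutral ballI)
        fix i assume "i \<in> {..<length Ws}"
        then have i: "i < length Ws" by simp
        obtain X where X: "Xs!i = Ws!i ** X ** Ws!i" using Xs i unfolding corner_def by auto
        have "tr_inner V (Xs!i) = trace (V ** (Ws!i ** (cadj X ** Ws!i)))"
          by (simp add: X tr_inner_def cadj_mult cWi[OF i] matrix_mul_assoc)
        also have "\<dots> = trace ((Ws!i ** (cadj X ** Ws!i)) ** V)"
          by (rule trace_mul_sym)
        also have "\<dots> = trace (Ws!i ** ((cadj X ** Ws!i) ** V))" by (simp add: matrix_mul_assoc)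
        also have "\<dots> = trace (((cadj X ** Ws!i) ** V) ** Ws!i)" by (rule trace_mul_sym)
        also have "\<dots> = trace (cadj X ** (Ws!i ** V ** Ws!i))" by (simp add: matrix_mul_assoc)
        also have "\<dots> = 0" by (simp add: VWj[OF i] trace_0[simplified])
        finally show "tr_inner V (Xs!i) = 0" .
      qed
      finally show "tr_inner V Y = 0" .
    qed
  qed
  then have "T V = 0" by (rule kill)
  then have "T Z = T (\<Sum>i<length Ws. Ws!i ** Z ** Ws!i)"
    unfolding V_def T_diff by simp
  also have "\<dots> = (\<Sum>i<length Ws. Ws!i ** T Z ** Ws!i)"
    unfolding T_sum by (intro sum.cong refl) (simp add: T_corner wcomm)
  finally show ?thesis .
qed

lemma vanish: "(\<And>j. j < length Ws \<Longrightarrow> Ws!j ** V ** Ws!j = 0) \<Longrightarrow> T V = 0"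
  by (subst decomp) (simp add: T_corner[symmetric] wcomm)

lemma orth_perp: "orth_proj W \<Longrightarrow> orth_proj (mat 1 - W)"
  by (simp add: orth_proj_def mat_diff_ldistrib mat_diff_rdistrib)

lemma term0:
  assumes i: "i < length Ws" and W: "orth_proj W" "comm Rs W"
  shows "T (Ws!i ** (W ** Y ** (mat 1 - W)) ** Ws!i) = 0"
proof -
  define Wi where "Wi = Ws!i"
  define P where "P = mat 1 - W"
  have Pp: "orth_proj P" "comm Rs P" using W by (auto simp: P_def orth_perp comm_diff comm_1)
  have Wip: "orth_proj Wi" "comm Rs Wi" using orth[OF i] wcomm[OF i] by (auto simp: Wi_def)
  have WiWi: "Wi ** Wi = Wi" and cWi': "cadj Wi = Wi" using Wip by (auto simp: orth_proj_def)
  have WW: "W ** W = W" and cW: "cadj W = W" using W by (auto simp: orth_proj_def)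
  have PP: "P ** P = P" using Pp by (auto simp: orth_proj_def)
  have irr: "irreducible_on T Wi" using wirr[OF i] by (simp add: Wi_def)
  have e1: "W ** Wi = Wi \<or> (\<forall>v. Wi *v v = v \<and> W *v v = v \<longrightarrow> v = 0)"
    by (rule eig[OF W Wip irr])
  have e2: "P ** Wi = Wi \<or> (\<forall>v. Wi *v v = v \<and> P *v v = v \<longrightarrow> v = 0)"
    by (rule eig[OF Pp Wip irr])
  show ?thesis
  proof (cases "W ** Wi = Wi")
    case True
    then have "P ** Wi = 0" by (simp add: P_def mat_diff_rdistrib)
    then show ?thesis unfolding Wi_def[symmetric] P_def[symmetric]
      by (simp add: matrix_mul_assoc[symmetric])
  next
    case nW: False
    show ?thesis
    proof (cases "P ** Wi = Wi")
      case True
      then have "W ** Wi = 0" by (simp add: P_def mat_diff_rdistrib)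
      moreover have "Wi ** W = cadj (W ** Wi)" by (simp add: cadj_mult cW cWi')
      ultimately have "Wi ** W = 0" by simp
      then show ?thesis unfolding Wi_def[symmetric] P_def[symmetric]
        by (simp add: matrix_mul_assoc)
    next
      case nP: False
      have EW: "\<And>v. Wi *v v = v \<Longrightarrow> W *v v = v \<Longrightarrow> v = 0" using e1 nW by blast
      have EP: "\<And>v. Wi *v v = v \<Longrightarrow> P *v v = v \<Longrightarrow> v = 0" using e2 nP by blast
      have G0: "T (Wi ** Z ** Wi) = 0" for Z
      proof -
        define G where "G = T (Wi ** Z ** Wi)"
        have WiG: "Wi ** G = G" unfolding G_def
          by (simp add: T_corner[OF Wip(2) Wip(2)] matrix_mul_assoc WiWi)
        have side: "(mat 1 - Wi) ** Q ** G = 0" if Q: "comm Rs Q" for Q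
        proof -
          have cq: "comm Rs ((mat 1 - Wi) ** Q)" by (intro comm_mult comm_diff comm_1 Wip Q)
          have "(mat 1 - Wi) ** Q ** G = T ((mat 1 - Wi) ** Q ** (Wi ** Z ** Wi))"
            unfolding G_def by (simp add: T_left[OF cq])
          also have "\<dots> = 0"
          proof (rule vanish)
            fix j assume j: "j < length Ws"
            show "Ws!j ** ((mat 1 - Wi) ** Q ** (Wi ** Z ** Wi)) ** Ws!j = 0"
            proof (cases "j = i")
              case True
              have "Wi ** (mat 1 - Wi) = 0" by (simp add: mat_diff_ldistrib WiWi)
              then show ?thesis using True by (simp add: Wi_def[symmetric] matrix_mul_assoc)
            next
              case False
              have "Wi ** Ws!j = 0" using port[OF i j] False by (simp add: Wi_def)
              then show ?thesis by (simp add: matrix_mul_assoc[symmetric])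
            qed
          qed
          finally show ?thesis .
        qed
        have "G *v v = 0" for v
        proof -
          define g where "g = G *v v"
          have gi: "Wi *v g = g" unfolding g_def by (simp add: matrix_vector_mul_assoc WiG)
          have fx: "Wi *v (Q *v g) = Q *v g" if Q: "comm Rs Q" for Q
          proof -
            have "(mat 1 - Wi) ** Q ** G = 0" by (rule side[OF Q])
            then have "Q ** G = Wi ** Q ** G" by (simp add: mat_diff_rdistrib)
            then show ?thesis unfolding g_def
              by (simp add: matrix_vector_mul_assoc) (metis matrix_mul_assoc)
          qed
          have u: "W *v g = 0"
            by (rule EW) (use fx[OF W(2)] in \<open>simp_all add: matrix_vector_mul_assoc WW\<close>)
          have u': "P *v g = 0"
            by (rule EP) (use fx[OF Pp(2)] in \<open>simp_all add: matrix_vector_mul_assoc PP\<close>)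
          have "g = W *v g + P *v g"
            by (simp add: P_def matrix_vector_mult_diff_rdistrib)
          then show ?thesis using u u' by (simp add: g_def)
        qed
        then show ?thesis unfolding G_def[symmetric] by (simp add: matrix_eq)
      qed
      show ?thesis unfolding Wi_def[symmetric] by (rule G0)
    qed
  qed
qed

lemma key:
  assumes W: "orth_proj W" "comm Rs W"
  shows "T (W ** Y ** (mat 1 - W)) = 0"
  by (subst decomp) (simp add: T_corner[symmetric] wcomm term0[OF _ W])

end


definition dd :: "'n::finite cmat \<Rightarrow> nat" where
  "dd W = dim {v. W *v v = v}"

lemma fixset_subspace: "subspace {v. (W::'n::finite cmat) *v v = v}"
  unfolding subspace_def
proof (intro conjI ballI allI)
  show "0 \<in> {v. W *v v = v}" by simp
  fix x y assume "x \<in> {v. W *v v = v}" "y \<in> {v. W *v v = v}"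
  then show "x + y \<in> {v. W *v v = v}" by (simp add: matrix_vector_right_distrib)
next
  fix c :: real and x assume "x \<in> {v. W *v v = v}"
  then show "c *\<^sub>R x \<in> {v. W *v v = v}" by (simp only: scaleR_smult mv_smult mem_Collect_eq)
qed

lemma dd_less:
  assumes W: "orth_proj W" and W': "orth_proj W'" and le: "W ** W' = W'" and ne: "W' \<noteq> W"
  shows "dd W' < dd W"
proof -
  have WW: "W ** W = W" and cW: "cadj W = W" and cW': "cadj W' = W'" using W W' by (auto simp: orth_proj_def)
  let ?S = "{v. W *v v = v}" and ?S' = "{v. W' *v v = v}"
  have sub: "?S' \<subseteq> ?S"
  proof
    fix v assume "v \<in> ?S'"
    then have "W' *v v = v" by simp
    then have "W *v v = (W ** W') *v v" by (metis matrix_vector_mul_assoc)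
    then show "v \<in> ?S" using le \<open>W' *v v = v\<close> by simp
  qed
  have "\<not> ?S \<subseteq> ?S'"
  proof
    assume h: "?S \<subseteq> ?S'"
    have "W' ** W = W"
    proof (rule mat_eq_by_vec)
      fix v have "W *v v \<in> ?S" by (simp add: matrix_vector_mul_assoc WW)
      then show "W' *v (W *v v) = W *v v" using h by auto
    qed
    then have "cadj (W' ** W) = W" using cW by simp
    then have "W ** W' = W" by (simp add: cadj_mult cW cW')
    then show False using le ne by simp
  qed
  then have ps: "?S' \<subset> ?S" using sub by blast
  have e1: "span ?S' = ?S'" by (rule real_vector.span_eq_iff[THEN iffD2, OF fixset_subspace])
  have e2: "span ?S = ?S" by (rule real_vector.span_eq_iff[THEN iffD2, OF fixset_subspace])
  have "span ?S' \<subset> span ?S" unfolding e1 e2 by (rule ps)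
  then show ?thesis unfolding dd_def by (rule dim_psubset)
qed



lemma sum_list_map_upt: "sum_list (map f [0..<n]) = (\<Sum>j<n. f j)"
  by (induction n) (auto simp: add.commute)

locale bwd = kraus +
  assumes SA: "trace_self_adjoint T"
    and C: "\<And>W. orth_proj W \<and> T ` corner W W \<subseteq> corner W W \<longrightarrow>
       (\<forall>X \<in> {A + B | A B. A \<in> corner W (perp W) \<and> B \<in> corner (perp W) W}. T X = 0)"
begin

lemma offd: "orth_proj W \<Longrightarrow> comm Rs W \<Longrightarrow> T (W ** Y ** (mat 1 - W)) = 0"
proof -
  assume W: "orth_proj W" "comm Rs W"
  have "W ** Y ** (mat 1 - W) + 0 \<in> {A + B | A B. A \<in> corner W (perp W) \<and> B \<in> corner (perp W) W}"
  proof -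
    have "W ** Y ** (mat 1 - W) \<in> corner W (perp W)" unfolding corner_def perp_def by auto
    moreover have "0 \<in> corner (perp W) W" unfolding corner_def by (auto intro!: exI[of _ 0])
    ultimately show ?thesis by blast
  qed
  then show ?thesis using C[of W] W comm_invariant by auto
qed

lemma build:
  "orth_proj P \<Longrightarrow> comm Rs P \<Longrightarrow> \<exists>Ws. (\<forall>W\<in>set Ws. orth_proj W \<and> comm Rs W \<and> irreducible_on T W) \<and>
     (\<forall>i<length Ws. \<forall>j<length Ws. i \<noteq> j \<longrightarrow> Ws!i ** Ws!j = 0) \<and> sum_list Ws = P"
proof (induction "dd P" arbitrary: P rule: less_induct)
  case less
  show ?case
  proof (cases "P = 0")
    case True
    then show ?thesis by (intro exI[of _ "[]"]) auto
  next
    case Pn0: False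
    have PP: "P ** P = P" and cP: "cadj P = P" using less.prems by (auto simp: orth_proj_def)
    let ?S = "\<lambda>W. orth_proj W \<and> comm Rs W \<and> W \<noteq> 0 \<and> P ** W = W"
    have "?S P" using less.prems Pn0 PP by simp
    then obtain W where SW: "?S W" and minW: "\<And>W'. ?S W' \<Longrightarrow> dd W \<le> dd W'"
      using ex_has_least_nat[of ?S P dd] by blast
    have W: "orth_proj W" "comm Rs W" "W \<noteq> 0" "P ** W = W" using SW by auto
    have WW: "W ** W = W" and cW: "cadj W = W" using W by (auto simp: orth_proj_def)
    have WP: "W ** P = W" using arg_cong[OF W(4), of cadj] by (simp add: cadj_mult cP cW)
    have irr: "irreducible_on T W" unfolding irreducible_on_def
    proof (intro allI impI)
      fix W' assume h: "orth_proj W' \<and> corner W' W' \<subseteq> corner W W \<and> T ` corner W' W' \<subseteq> corner W' W'"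
      have W'p: "orth_proj W'" using h by simp
      have W'W': "W' ** W' = W'" using W'p by (auto simp: orth_proj_def)
      have cW': "comm Rs W'" using inv_comm[OF SA W'p] h by simp
      have "W' \<in> corner W' W'" unfolding corner_def using W'W' by (auto intro!: exI[of _ "mat 1"])
      then have "W' \<in> corner W W" using h by auto
      then obtain X where X: "W' = W ** X ** W" unfolding corner_def by auto
      have le: "W ** W' = W'" unfolding X by (simp add: matrix_mul_assoc WW)
      show "W' = 0 \<or> W' = W"
      proof (rule ccontr)
        assume c: "\<not> (W' = 0 \<or> W' = W)"
        have "P ** W' = W'" using le W(4) by (metis matrix_mul_assoc)
        then have "?S W'" using W'p cW' c by simp
        then have "dd W \<le> dd W'" by (rule minW)
        moreover have "dd W' < dd W" using dd_less[OF W(1) W'p le] c by simp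
        ultimately show False by simp
      qed
    qed
    define P' where "P' = P - W"
    have P'p: "orth_proj P'" unfolding P'_def orth_proj_def
      using PP cP WW cW W(4) WP by (simp add: mat_diff_ldistrib mat_diff_rdistrib)
    have P'c: "comm Rs P'" unfolding P'_def using less.prems W(2) by (simp add: comm_diff)
    have PP': "P ** P' = P'" unfolding P'_def by (simp add: mat_diff_ldistrib PP W(4))
    have "P' \<noteq> P" unfolding P'_def using W(3) by simp
    then have "dd P' < dd P" using dd_less[OF less.prems(1) P'p PP'] by simp
    then obtain Ws where Ws: "\<forall>W\<in>set Ws. orth_proj W \<and> comm Rs W \<and> irreducible_on T W"
      "\<forall>i<length Ws. \<forall>j<length Ws. i \<noteq> j \<longrightarrow> Ws!i ** Ws!j = 0" "sum_list Ws = P'"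
      using less.hyps P'p P'c by blast
    have below: "P' ** (Ws!k) = Ws!k" if k: "k < length Ws" for k
    proof -
      have "P' ** (Ws!k) = (\<Sum>j<length Ws. Ws!j ** Ws!k)"
        unfolding Ws(3)[symmetric] by (simp add: sum_list_sum_nth atLeast0LessThan mat_sum_rdistrib)
      also have "\<dots> = (\<Sum>j<length Ws. if j = k then Ws!k else 0)"
      proof (intro sum.cong refl)
        fix j assume "j \<in> {..<length Ws}"
        then show "Ws!j ** Ws!k = (if j = k then Ws!k else 0)"
          using Ws(1,2) k nth_mem[OF k] by (auto simp: orth_proj_def)
      qed
      also have "\<dots> = Ws!k" using k by simp
      finally show ?thesis .
    qed
    have o1: "W ** Ws!k = 0" if k: "k < length Ws" for k
    proof -
      have "W ** Ws!k = W ** (P' ** Ws!k)" using below[OF k] by simp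
      also have "\<dots> = 0" unfolding P'_def by (simp add: matrix_mul_assoc mat_diff_ldistrib WP WW)
      finally show ?thesis .
    qed
    have o2: "Ws!k ** W = 0" if k: "k < length Ws" for k
    proof -
      have ck: "cadj (Ws!k) = Ws!k" using Ws(1) nth_mem[OF k] by (auto simp: orth_proj_def)
      have "Ws!k ** W = cadj (W ** Ws!k)" by (simp add: cadj_mult ck cW)
      then show ?thesis using o1[OF k] by simp
    qed
    show ?thesis
    proof (intro exI[of _ "W # Ws"] conjI)
      show "\<forall>W\<in>set (W # Ws). orth_proj W \<and> comm Rs W \<and> irreducible_on T W"
        using Ws(1) W irr by auto
      show "sum_list (W # Ws) = P" using Ws(3) by (simp add: P'_def)
      show "\<forall>i<length (W # Ws). \<forall>j<length (W # Ws). i \<noteq> j \<longrightarrow> (W # Ws) ! i ** (W # Ws) ! j = 0"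
      proof (intro allI impI)
        fix i j assume i: "i < length (W # Ws)" and j: "j < length (W # Ws)" and ij: "i \<noteq> j"
        show "(W # Ws) ! i ** (W # Ws) ! j = 0"
        proof (cases i)
          case 0
          then obtain j' where "j = Suc j'" using ij by (cases j) auto
          then show ?thesis using 0 o1 j by simp
        next
          case (Suc i')
          show ?thesis
          proof (cases j)
            case 0
            then show ?thesis using Suc o2 i by simp
          next
            case (Suc j')
            then show ?thesis using \<open>i = Suc i'\<close> Ws(2) i j ij by simp
          qed
        qed
      qed
    qed
  qed
qed

lemma creducible: "completely_reducible T"
proof -
  obtain Ws where Ws: "\<forall>W\<in>set Ws. orth_proj W \<and> comm Rs W \<and> irreducible_on T W"
      "\<forall>i<length Ws. \<forall>j<length Ws. i \<noteq> j \<longrightarrow> Ws!i ** Ws!j = 0" "sum_list Ws = mat 1"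
    using build[of "mat 1"] comm_1 by (auto simp: orth_proj_def)
  let ?n = "length Ws"
  have Wi: "orth_proj (Ws!i)" "comm Rs (Ws!i)" "irreducible_on T (Ws!i)" if "i < ?n" for i
    using Ws(1) nth_mem[OF that] by auto
  have sum1: "(\<Sum>i<?n. Ws!i) = mat 1" using Ws(3) by (simp add: sum_list_sum_nth atLeast0LessThan)
  have killX: "T X = 0" if X: "X \<in> orth_compl (corner_sum Ws)" for X
  proof -
    have diag: "Ws!a ** X ** Ws!a = 0" if a: "a < ?n" for a
    proof -
      define Z where "Z = Ws!a ** X ** Ws!a"
      have WW: "Ws!a ** Ws!a = Ws!a" and cWa: "cadj (Ws!a) = Ws!a" using Wi(1)[OF a] by (auto simp: orth_proj_def)
      define Xs where "Xs = map (\<lambda>j. if j = a then Ws!a ** Z ** Ws!a else 0) [0..<?n]"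
      have "Ws!a ** Z ** Ws!a \<in> corner_sum Ws"
        unfolding corner_sum_def
      proof (intro CollectI exI[of _ Xs] conjI allI impI)
        show "length Xs = ?n" by (simp add: Xs_def)
        fix i assume "i < ?n"
        then show "Xs ! i \<in> corner (Ws ! i) (Ws ! i)"
          unfolding corner_def Xs_def by (auto intro: exI[of _ 0])
      next
        show "Ws!a ** Z ** Ws!a = sum_list Xs"
          unfolding Xs_def sum_list_map_upt using a by simp
      qed
      then have "tr_inner X (Ws!a ** Z ** Ws!a) = 0" using X unfolding orth_compl_def by auto
      then have "trace (X ** (Ws!a ** (cadj Z ** Ws!a))) = 0"
        by (simp add: tr_inner_def cadj_mult cWa matrix_mul_assoc)
      moreover have "trace (X ** (Ws!a ** (cadj Z ** Ws!a))) = trace (Z ** cadj Z)"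
      proof -
        have "trace (X ** (Ws!a ** (cadj Z ** Ws!a))) = trace (Ws!a ** (X ** (Ws!a ** cadj Z)))"
          by (subst trace_mul_sym) (simp add: matrix_mul_assoc)
        also have "\<dots> = trace (Z ** cadj Z)" by (simp add: Z_def matrix_mul_assoc)
        finally show ?thesis .
      qed
      ultimately show ?thesis using trace_AAs_zero[of Z] by (simp add: Z_def)
    qed
    have "X = mat 1 ** X ** mat 1" by simp
    also have "\<dots> = (\<Sum>a<?n. \<Sum>b<?n. Ws!a ** X ** Ws!b)"
      unfolding sum1[symmetric] by (simp add: mat_sum_rdistrib mat_sum_ldistrib matrix_mul_assoc) (rule sum.swap)
    finally have eqX: "X = (\<Sum>a<?n. \<Sum>b<?n. Ws!a ** X ** Ws!b)" .
    have "T X = (\<Sum>a<?n. \<Sum>b<?n. T (Ws!a ** X ** Ws!b))"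
      using arg_cong[where f=T, OF eqX] by (simp only: T_sum)
    also have "\<dots> = 0"
    proof (intro sum.neutral ballI)
      fix a b assume a: "a \<in> {..<?n}" and b: "b \<in> {..<?n}"
      show "T (Ws!a ** X ** Ws!b) = 0"
      proof (cases "a = b")
        case True
        then show ?thesis using diag a by simp
      next
        case False
        have "Ws!b ** (mat 1 - Ws!a) = Ws!b"
          using Ws(2) a b False by (simp add: mat_diff_ldistrib)
        then have "Ws!a ** X ** Ws!b = Ws!a ** (Ws!a ** X ** Ws!b) ** (mat 1 - Ws!a)"
          using Wi(1)[of a] a by (simp add: orth_proj_def matrix_mul_assoc[symmetric])
            (metis matrix_mul_assoc)
        then show ?thesis using offd[OF Wi(1,2), of a "Ws!a ** X ** Ws!b"] a by simp
      qed
    qed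
    finally show ?thesis .
  qed
  show ?thesis unfolding completely_reducible_def
    using Wi Ws(2) killX comm_invariant by (intro exI[of _ Ws]) auto
qed


end

theorem mainTheorem4:
  fixes T :: "complex^'n^'n \<Rightarrow> complex^'n^'n"
  assumes "completely_positive T"
    and "trace_self_adjoint T"
  shows "completely_reducible T \<longleftrightarrow>
    (\<forall>W. orth_proj W \<and> T ` corner W W \<subseteq> corner W W \<longrightarrow>
       (\<forall>X \<in> {A + B | A B. A \<in> corner W (perp W) \<and> B \<in> corner (perp W) W}. T X = 0))"
proof -
  obtain Rs where K: "\<And>X. T X = (\<Sum>R\<leftarrow>Rs. R ** X ** cadj R)"
    using assms(1) unfolding completely_positive_def by blast
  interpret kraus T Rs by unfold_locales (rule K)
  show ?thesis
  proof
    assume "completely_reducible T"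
    then obtain Ws where Ws: "\<forall>i<length Ws. orth_proj (Ws ! i)"
        "\<forall>i<length Ws. \<forall>j<length Ws. i \<noteq> j \<longrightarrow> Ws ! i ** Ws ! j = 0"
        "\<forall>i<length Ws. T ` corner (Ws ! i) (Ws ! i) \<subseteq> corner (Ws ! i) (Ws ! i)"
        "\<forall>i<length Ws. irreducible_on T (Ws ! i)"
        "\<forall>X\<in>orth_compl (corner_sum Ws). T X = 0"
      unfolding completely_reducible_def by blast
    interpret cred T Rs Ws by unfold_locales (use assms(2) Ws in auto)
    show "\<forall>W. orth_proj W \<and> T ` corner W W \<subseteq> corner W W \<longrightarrow>
       (\<forall>X \<in> {A + B | A B. A \<in> corner W (perp W) \<and> B \<in> corner (perp W) W}. T X = 0)"
    proof (intro allI impI ballI)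
      fix W X
      assume h: "orth_proj W \<and> T ` corner W W \<subseteq> corner W W"
        and X: "X \<in> {A + B | A B. A \<in> corner W (perp W) \<and> B \<in> corner (perp W) W}"
      have Wp: "orth_proj W" using h by simp
      have Wc: "comm Rs W" using inv_comm[OF assms(2) Wp] h by simp
      have Pp: "orth_proj (mat 1 - W)" by (rule orth_perp[OF Wp])
      have Pc: "comm Rs (mat 1 - W)" by (intro comm_diff comm_1 Wc)
      obtain A B where X: "X = A + B" and A: "A \<in> corner W (perp W)" and B: "B \<in> corner (perp W) W"
        using X by blast
      obtain Y where Y: "A = W ** Y ** (mat 1 - W)" using A unfolding corner_def perp_def by auto
      obtain Y' where Y': "B = (mat 1 - W) ** Y' ** W" using B unfolding corner_def perp_def by auto
      have "T A = 0" unfolding Y by (rule key[OF Wp Wc])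
      moreover have "T B = 0" using key[OF Pp Pc, of Y'] unfolding Y' by simp
      ultimately show "T X = 0" by (simp add: X T_add)
    qed
  next
    assume C: "\<forall>W. orth_proj W \<and> T ` corner W W \<subseteq> corner W W \<longrightarrow>
       (\<forall>X \<in> {A + B | A B. A \<in> corner W (perp W) \<and> B \<in> corner (perp W) W}. T X = 0)"
    interpret bwd T Rs by unfold_locales (use assms(2) C in auto)
    show "completely_reducible T" by (rule creducible)
  qed
qed

end
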